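(* Given the ability to perform incoherent unitaries and $k$ Hadamard gates (or generalised controlled Hadamards), computational basis measurements and classical control, then even with access to an arbitrary ancillary state $|\gamma\rangle$, it is impossible to implement $n$ Hadamards $H^{\otimes n}$ exactly (deterministically) for $n>k$.
   Context: Fix the computational basis. A unitary is incoherent if it has the form $U=\sum_x e^{i\theta_x}|\pi(x)\rangle\langle x|$ for real $\theta_x$ and a permutation $\pi$. A generalised controlled-$W$ gate is $\sum_{x\in S}|x\rangle\langle x|\otimes W+\sum_{y\in S^c}|y\rangle\langle y|\otimes I$ for some subset $S$ of bitstrings. Such operations are modelled as channels $\rho\mapsto\mathrm{Tr}_2\big(U(\rho\otimes|\gamma\rangle\langle\gamma|)U^\dagger\big)$ with $U=U_kV_k\cdots U_1V_1U_0$, where the $U_i$ are incoherent unitaries and the $V_i$ are (generalised controlled) Hadamards. *)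

theory Defs
  imports Complex_Main
begin

text \<open>A register of N qubits is indexed by the computational basis
  bitstrings, encoded as naturals i < 2^N; qubit t of i is (i div 2^t) mod 2.
  Operators are matrices nat \<Rightarrow> nat \<Rightarrow> complex of which only the entries
  with indices < 2^N matter. On the joint system (n data qubits, m ancilla qubits)
  the basis state |x> (x) |y> has index x * 2^m + y.\<close>

type_synonym cmat = "nat \<Rightarrow> nat \<Rightarrow> complex"

definition mmult :: "nat \<Rightarrow> cmat \<Rightarrow> cmat \<Rightarrow> cmat" where
  "mmult d A B = (\<lambda>i j. \<Sum>l<d. A i l * B l j)"

definition bit_of :: "nat \<Rightarrow> nat \<Rightarrow> nat" where
  "bit_of t i = (i div 2 ^ t) mod 2"

definition incoherent :: "nat \<Rightarrow> cmat \<Rightarrow> bool" where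
  "incoherent N U \<longleftrightarrow> (\<exists>\<pi> \<theta>. bij_betw \<pi> {..<2^N} {..<2^N} \<and>
     (\<forall>i<2^N. \<forall>j<2^N. U i j = (if i = \<pi> j then cis (\<theta> j) else 0)))"

text \<open>Generalised controlled Hadamard with target qubit t, controlled by the set S of
  bitstrings of the remaining qubits (encoded as the index with bit t cleared):
  sum_{x in S} |x><x| (x) H + sum_{y notin S} |y><y| (x) I.  (S = everything gives a
  plain Hadamard on qubit t.)\<close>
definition ctrl_had :: "nat \<Rightarrow> nat set \<Rightarrow> cmat" where
  "ctrl_had t S = (\<lambda>i j.
     let ci = i - bit_of t i * 2 ^ t; cj = j - bit_of t j * 2 ^ t in
     if ci \<noteq> cj then 0
     else if ci \<in> S then (-1) ^ (bit_of t i * bit_of t j) / complex_of_real (sqrt 2)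
     else (if i = j then 1 else 0))"

definition gen_ctrl_hadamard :: "nat \<Rightarrow> cmat \<Rightarrow> bool" where
  "gen_ctrl_hadamard N V \<longleftrightarrow> (\<exists>t<N. \<exists>S. \<forall>i<2^N. \<forall>j<2^N. V i j = ctrl_had t S i j)"

text \<open>The circuit U = U_k V_k ... U_1 V_1 U_0, given U_0 and the list of pairs
  (V_1,U_1), ..., (V_k,U_k).\<close>
primrec circ :: "nat \<Rightarrow> cmat \<Rightarrow> (cmat \<times> cmat) list \<Rightarrow> cmat" where
  "circ d A [] = A"
| "circ d A (p # ps) = circ d (mmult d (snd p) (mmult d (fst p) A)) ps"

text \<open>The channel rho |-> Tr_2 (U (rho (x) |gamma><gamma|) U^dagger), n data qubits,
  m ancilla qubits.\<close>
definition channel :: "nat \<Rightarrow> nat \<Rightarrow> (nat \<Rightarrow> complex) \<Rightarrow> cmat \<Rightarrow> cmat \<Rightarrow> cmat" where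
  "channel n m \<gamma> U \<rho> = (\<lambda>x x'.
     let D = 2 ^ (n + m);
         \<sigma> = (\<lambda>a b. \<rho> (a div 2 ^ m) (b div 2 ^ m) * \<gamma> (a mod 2 ^ m) * cnj (\<gamma> (b mod 2 ^ m)))
     in \<Sum>y<2 ^ m. \<Sum>a<D. \<Sum>b<D. U (x * 2 ^ m + y) a * \<sigma> a b * cnj (U (x' * 2 ^ m + y) b))"

definition hadamard_n :: "nat \<Rightarrow> cmat" where
  "hadamard_n n = (\<lambda>x y. (-1) ^ (\<Sum>t<n. bit_of t x * bit_of t y) / complex_of_real (sqrt (2 ^ n)))"

definition hadamard_conj :: "nat \<Rightarrow> cmat \<Rightarrow> cmat" where
  "hadamard_conj n \<rho> = (\<lambda>x x'. \<Sum>a<2^n. \<Sum>b<2^n.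
      hadamard_n n x a * \<rho> a b * cnj (hadamard_n n x' b))"

definition density :: "nat \<Rightarrow> cmat \<Rightarrow> bool" where
  "density n \<rho> \<longleftrightarrow>
     (\<forall>v :: nat \<Rightarrow> complex. let q = (\<Sum>i<2^n. \<Sum>j<2^n. cnj (v i) * \<rho> i j * v j)
        in Im q = 0 \<and> Re q \<ge> 0) \<and>
     (\<Sum>i<2^n. \<rho> i i) = 1"

end

theory Submission
  imports Defs
begin


definition app :: "nat \<Rightarrow> cmat \<Rightarrow> (nat \<Rightarrow> complex) \<Rightarrow> nat \<Rightarrow> complex" where
  "app d A v = (\<lambda>i. \<Sum>j<d. A i j * v j)"
definition l1 :: "nat \<Rightarrow> (nat \<Rightarrow> complex) \<Rightarrow> real" where
  "l1 d v = (\<Sum>i<d. cmod (v i))"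
definition ip :: "nat \<Rightarrow> (nat \<Rightarrow> complex) \<Rightarrow> (nat \<Rightarrow> complex) \<Rightarrow> complex" where
  "ip d u v = (\<Sum>i<d. cnj (u i) * v i)"

lemma sum_group: fixes a M :: nat shows "(\<Sum>i<a*M. g i) = (\<Sum>x<a. \<Sum>y<M. g (x*M+y))"
proof (induction a)
  case 0 then show ?case by simp
next
  case (Suc a)
  have e: "{..<Suc a * M} = {..<a*M} \<union> {a*M..<a*M+M}" by auto
  have "(\<Sum>i<Suc a*M. g i) = (\<Sum>i<a*M. g i) + (\<Sum>i\<in>{a*M..<a*M+M}. g i)"
    unfolding e by (rule sum.union_disjoint) auto
  also have "(\<Sum>i\<in>{a*M..<a*M+M}. g i) = (\<Sum>y<M. g (a*M+y))"
    using sum.shift_bounds_nat_ivl[of g 0 "a*M" M] by (simp add: atLeast0LessThan add.commute)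
  finally show ?case using Suc by simp
qed

lemma app_mmult: "app d (mmult d A B) v = app d A (app d B v)"
  unfolding app_def mmult_def
  apply (rule ext) apply (simp add: sum_distrib_left sum_distrib_right mult.assoc) by (rule sum.swap)

lemma incoherent_props:
  assumes "incoherent N U"
  shows "l1 (2^N) (app (2^N) U v) = l1 (2^N) v \<and> ip (2^N) (app (2^N) U u) (app (2^N) U v) = ip (2^N) u v"
proof -
  obtain \<pi> \<theta> where b: "bij_betw \<pi> {..<2^N} {..<(2::nat)^N}"
    and U: "\<forall>i<2^N. \<forall>j<2^N. U i j = (if i = \<pi> j then cis (\<theta> j) else 0)"
    using assms unfolding incoherent_def by blast
  have key: "app (2^N) U w (\<pi> j) = cis (\<theta> j) * w j" if j: "j < 2^N" for j w
  proof -
    have pj: "\<pi> j < 2^N" using b j by (auto simp: bij_betw_def)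
    have "app (2^N) U w (\<pi> j) = (\<Sum>l<2^N. (if l = j then cis (\<theta> l) * w l else 0))"
      unfolding app_def
    proof (rule sum.cong[OF refl])
      fix l assume l: "l \<in> {..<(2::nat)^N}"
      have "(\<pi> j = \<pi> l) = (j = l)" using b j l by (auto simp: bij_betw_def inj_on_def)
      then show "U (\<pi> j) l * w l = (if l = j then cis (\<theta> l) * w l else 0)"
        using U pj l by auto
    qed
    also have "\<dots> = cis (\<theta> j) * w j" using j by (simp add: sum.delta)
    finally show ?thesis .
  qed
  have r: "(\<Sum>i<2^N. g i) = (\<Sum>j<2^N. g (\<pi> j))" for g :: "nat \<Rightarrow> 'a::comm_monoid_add"
    using sum.reindex_bij_betw[OF b, of g] by simp
  have "l1 (2^N) (app (2^N) U v) = (\<Sum>j<2^N. cmod (cis (\<theta> j) * v j))"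
    unfolding l1_def by (subst r) (simp add: key)
  also have "\<dots> = l1 (2^N) v" by (simp add: l1_def norm_mult)
  finally have 1: "l1 (2^N) (app (2^N) U v) = l1 (2^N) v" .
  have "ip (2^N) (app (2^N) U u) (app (2^N) U v) = (\<Sum>j<2^N. cnj (cis (\<theta> j) * u j) * (cis (\<theta> j) * v j))"
    unfolding ip_def by (subst r) (simp add: key)
  also have "\<dots> = ip (2^N) u v" unfolding ip_def
  proof (rule sum.cong[OF refl])
    fix j
    have "cnj (cis (\<theta> j)) * cis (\<theta> j) = 1"
      by (simp add: cis_cnj cis_mult)
    then show "cnj (cis (\<theta> j) * u j) * (cis (\<theta> j) * v j) = cnj (u j) * v j"
      by (metis (no_types, lifting) complex_cnj_mult mult.assoc mult.left_commute mult_1)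
  qed
  finally show ?thesis using 1 by simp
qed



lemma bit01: "bit_of t i = 0 \<or> bit_of t i = 1"
  unfolding bit_of_def by auto

lemma bit_add: "bit_of t c = 0 \<Longrightarrow> bit_of t (c + 2^t) = 1"
  unfolding bit_of_def by (simp add: div_add_self2 mod_Suc)

lemma add_lt:
  assumes "t < N" "c < 2^N" "bit_of t c = 0"
  shows "c + 2^t < (2::nat)^N"
proof -
  define q where "q = c div 2^t"
  have q: "q < 2^(N-t)" using assms(2) unfolding q_def
    by (simp add: div_less_iff_less_mult power_add[symmetric] assms(1) less_imp_le_nat)
  have eq: "even q" using assms(3) unfolding q_def bit_of_def by (simp add: even_iff_mod_2_eq_zero)
  have ep: "even ((2::nat)^(N-t))" using assms(1) by simp
  have "q + 2 \<le> 2^(N-t)"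
  proof -
    obtain a where a: "q = 2*a" using evenE[OF eq] by blast
    obtain b where b: "(2::nat)^(N-t) = 2*b" using evenE[OF ep] by blast
    show ?thesis using q unfolding a b by simp
  qed
  have "c = q * 2^t + c mod 2^t" unfolding q_def using div_mult_mod_eq[of c "2^t"] by simp
  moreover have "c mod 2^t < 2^t" by simp
  moreover have "(q+2)*2^t = q*2^t + 2*2^t" by (simp add: algebra_simps)
  ultimately have "c + 2^t < (q+2) * 2^t" by linarith
  also have "\<dots> \<le> 2^(N-t) * 2^t" using mult_le_mono1[OF \<open>q + 2 \<le> 2^(N-t)\<close>, of "2^t"] by simp
  also have "\<dots> = 2^N" using assms(1) by (simp add: power_add[symmetric])
  finally show ?thesis .
qed

definition cl :: "nat \<Rightarrow> nat \<Rightarrow> nat" where "cl t i = i - bit_of t i * 2^t"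

lemma cl0: "bit_of t c = 0 \<Longrightarrow> cl t c = c" unfolding cl_def by simp
lemma cl1: "bit_of t c = 0 \<Longrightarrow> cl t (c + 2^t) = c" unfolding cl_def by (simp add: bit_add)

lemma cl_props:
  assumes "i < 2^N"
  shows "cl t i < 2^N \<and> bit_of t (cl t i) = 0 \<and> (i = cl t i \<or> i = cl t i + 2^t)"
proof (cases "bit_of t i = 0")
  case True then show ?thesis using assms by (simp add: cl0)
next
  case False
  then have b: "bit_of t i = 1" using bit01 by metis
  then have od: "odd (i div 2^t)" unfolding bit_of_def by (simp add: odd_iff_mod_2_eq_one)
  have ge: "i \<ge> 2^t"
  proof (rule ccontr)
    assume "\<not> i \<ge> 2^t"
    then have "i div 2^t = 0" by simp
    then show False using od by simp
  qed
  then obtain j where j: "i = j + 2^t" using le_add_diff_inverse2 by metis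
  have "i div 2^t = j div 2^t + 1" unfolding j by simp
  then have "even (j div 2^t)" using od by simp
  then have bj: "bit_of t j = 0" unfolding bit_of_def by (simp add: even_iff_mod_2_eq_zero)
  have "cl t i = j" unfolding cl_def using b j by simp
  then show ?thesis using assms bj j by auto
qed

lemma sum_split:
  fixes g :: "nat \<Rightarrow> 'a::comm_monoid_add"
  assumes "t < N"
  shows "(\<Sum>i<2^N. g i) = (\<Sum>c\<in>{c. c < 2^N \<and> bit_of t c = 0}. g c + g (c + 2^t))"
proof -
  let ?C = "{c. c < (2::nat)^N \<and> bit_of t c = 0}"
  let ?B = "{c. c < (2::nat)^N \<and> bit_of t c = 1}"
  have u: "{..<2^N} = ?C \<union> ?B"
  proof
    show "{..<2^N} \<subseteq> ?C \<union> ?B"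
    proof
      fix i assume "i \<in> {..<(2::nat)^N}"
      then show "i \<in> ?C \<union> ?B" using bit01[of t i] by blast
    qed
  qed auto
  have "(\<Sum>i<2^N. g i) = sum g ?C + sum g ?B"
    unfolding u by (rule sum.union_disjoint) auto
  moreover have "bij_betw (\<lambda>c. c + 2^t) ?C ?B"
  proof (rule bij_betw_imageI)
    show "inj_on (\<lambda>c. c + 2^t) ?C" by (auto simp: inj_on_def)
    show "(\<lambda>c. c + 2^t) ` ?C = ?B"
    proof
      show "(\<lambda>c. c + 2^t) ` ?C \<subseteq> ?B" using add_lt[OF assms] bit_add by auto
      show "?B \<subseteq> (\<lambda>c. c + 2^t) ` ?C"
      proof
        fix i assume i: "i \<in> ?B"
        then have "cl t i < 2^N \<and> bit_of t (cl t i) = 0 \<and> (i = cl t i \<or> i = cl t i + 2^t)"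
          using cl_props by auto
        moreover have "i \<noteq> cl t i"
        proof
          assume "i = cl t i"
          then have "bit_of t i = 0" using i cl_props[of i N t] by simp
          then show False using i by simp
        qed
        ultimately show "i \<in> (\<lambda>c. c + 2^t) ` ?C" by auto
      qed
    qed
  qed
  then have "sum g ?B = (\<Sum>c\<in>?C. g (c + 2^t))"
    by (rule sum.reindex_bij_betw[symmetric])
  ultimately show ?thesis by (simp add: sum.distrib)
qed



lemma ch_zero: "cl t i \<noteq> cl t j \<Longrightarrow> ctrl_had t S i j = 0"
  unfolding ctrl_had_def cl_def Let_def by auto

lemma ch_app:
  assumes t: "t < N" and i: "i < 2^N"
    and V: "\<forall>i<2^N. \<forall>j<2^N. V i j = ctrl_had t S i j"
  shows "app (2^N) V v i = ctrl_had t S i (cl t i) * v (cl t i)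
            + ctrl_had t S i (cl t i + 2^t) * v (cl t i + 2^t)"
proof -
  let ?C = "{c. c < (2::nat)^N \<and> bit_of t c = 0}"
  let ?f = "\<lambda>j. ctrl_had t S i j * v j"
  have "app (2^N) V v i = (\<Sum>j<2^N. ?f j)"
    unfolding app_def using V i by (intro sum.cong) auto
  also have "\<dots> = (\<Sum>c\<in>?C. ?f c + ?f (c + 2^t))" by (rule sum_split[OF t])
  also have "\<dots> = ?f (cl t i) + ?f (cl t i + 2^t)"
  proof -
    have m: "cl t i \<in> ?C" using cl_props[OF i] by auto
    have z: "\<forall>c\<in>?C - {cl t i}. ?f c + ?f (c + 2^t) = 0"
    proof
      fix c assume "c \<in> ?C - {cl t i}"
      then have c: "c \<in> ?C" "c \<noteq> cl t i" by auto
      then have "cl t c \<noteq> cl t i" "cl t (c + 2^t) \<noteq> cl t i" by (auto simp: cl0 cl1)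
      then show "?f c + ?f (c + 2^t) = 0" using ch_zero by (metis add.right_neutral mult_zero_left)
    qed
    show ?thesis using sum.remove[OF _ m, of "\<lambda>c. ?f c + ?f (c + 2^t)"] sum.neutral[OF z] by simp
  qed
  finally show ?thesis .
qed

definition hh :: complex where "hh = 1 / complex_of_real (sqrt 2)"

lemma ch_pair:
  assumes t: "t < N" and c: "c < 2^N" "bit_of t c = 0"
    and V: "\<forall>i<2^N. \<forall>j<2^N. V i j = ctrl_had t S i j"
  shows "app (2^N) V v c = (if c \<in> S then hh * (v c + v (c + 2^t)) else v c)"
    and "app (2^N) V v (c + 2^t) = (if c \<in> S then hh * (v c - v (c + 2^t)) else v (c + 2^t))"
proof -
  have e: "c + 2^t < 2^N" using add_lt[OF t c] .
  have b1: "bit_of t (c + 2^t) = 1" using bit_add[OF c(2)] .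
  have ne: "c \<noteq> c + 2^t" by simp
  show "app (2^N) V v c = (if c \<in> S then hh * (v c + v (c + 2^t)) else v c)"
    using ch_app[OF t c(1) V, of v] c(2) b1 ne
    by (simp add: cl0 ctrl_had_def Let_def hh_def algebra_simps)
  show "app (2^N) V v (c + 2^t) = (if c \<in> S then hh * (v c - v (c + 2^t)) else v (c + 2^t))"
    using ch_app[OF t e V, of v] c(2) b1 ne
    by (simp add: cl1 ctrl_had_def Let_def hh_def algebra_simps diff_divide_distrib)
qed

lemma hh_sq: "hh * hh = 1/2" "cnj hh = hh"
  unfolding hh_def by (simp_all add: of_real_mult[symmetric] del: of_real_mult)

lemma norm_hh: "cmod hh = 1 / sqrt 2" unfolding hh_def by (simp add: norm_divide)

lemma pair_l1_up: "cmod (hh * (a + b)) + cmod (hh * (a - b)) \<le> sqrt 2 * (cmod a + cmod b)"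
proof -
  have "cmod (a+b) + cmod (a-b) \<le> 2 * (cmod a + cmod b)"
    using norm_triangle_ineq[of a b] norm_triangle_ineq4[of a b] by simp
  then have "(cmod (a+b) + cmod (a-b)) / sqrt 2 \<le> 2 * (cmod a + cmod b) / sqrt 2"
    by (simp add: divide_right_mono)
  also have "2 * (cmod a + cmod b) / sqrt 2 = sqrt 2 * (cmod a + cmod b)"
    by (metis real_div_sqrt times_divide_eq_left zero_le_numeral)
  finally show ?thesis by (simp add: norm_mult norm_hh add_divide_distrib)
qed

lemma pair_l1_down: "cmod a + cmod b \<le> sqrt 2 * (cmod (hh * (a + b)) + cmod (hh * (a - b)))"
proof -
  have 1: "2 * cmod a \<le> cmod (a+b) + cmod (a-b)"
    using norm_triangle_ineq[of "a+b" "a-b"] by (simp add: mult_2 [symmetric] norm_mult[of 2 a, simplified] )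
  have 2: "2 * cmod b \<le> cmod (a+b) + cmod (a-b)"
    using norm_triangle_ineq4[of "a+b" "a-b"] by (simp add: mult_2 [symmetric] norm_mult[of 2 b, simplified])
  have "sqrt 2 * (cmod (hh * (a + b)) + cmod (hh * (a - b))) = cmod (a+b) + cmod (a-b)"
    by (simp only: norm_mult norm_hh) (simp add: field_simps)
  then show ?thesis using 1 2 by simp
qed

lemma pair_ip: "cnj (hh * (a + b)) * (hh * (e + f)) + cnj (hh * (a - b)) * (hh * (e - f))
   = cnj a * e + cnj b * f"
proof -
  have "cnj (hh * (a + b)) * (hh * (e + f)) + cnj (hh * (a - b)) * (hh * (e - f))
     = (hh * hh) * ((cnj a + cnj b) * (e + f) + (cnj a - cnj b) * (e - f))"
    by (simp only: complex_cnj_mult hh_sq(2) complex_cnj_add complex_cnj_diff) (simp add: algebra_simps)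
  also have "\<dots> = (1/2) * (2 * (cnj a * e + cnj b * f))"
    unfolding hh_sq(1) by (simp add: algebra_simps)
  also have "\<dots> = cnj a * e + cnj b * f" by simp
  finally show ?thesis .
qed

lemma ch_props:
  assumes "gen_ctrl_hadamard N V"
  shows "l1 (2^N) (app (2^N) V v) \<le> sqrt 2 * l1 (2^N) v"
    and "l1 (2^N) v \<le> sqrt 2 * l1 (2^N) (app (2^N) V v)"
    and "ip (2^N) (app (2^N) V u) (app (2^N) V v) = ip (2^N) u v"
proof -
  obtain t S where t: "t < N" and V: "\<forall>i<2^N. \<forall>j<2^N. V i j = ctrl_had t S i j"
    using assms unfolding gen_ctrl_hadamard_def by blast
  let ?C = "{c. c < (2::nat)^N \<and> bit_of t c = 0}"
  note P = ch_pair[OF t _ _ V]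
  have "l1 (2^N) (app (2^N) V v) = (\<Sum>c\<in>?C. cmod (app (2^N) V v c) + cmod (app (2^N) V v (c + 2^t)))"
    unfolding l1_def by (rule sum_split[OF t])
  also have "\<dots> \<le> (\<Sum>c\<in>?C. sqrt 2 * (cmod (v c) + cmod (v (c + 2^t))))"
  proof (rule sum_mono)
    fix c assume c: "c \<in> ?C"
    have "cmod (v c) + cmod (v (c + 2^t)) \<le> sqrt 2 * (cmod (v c) + cmod (v (c + 2^t)))"
      using mult_right_mono[of 1 "sqrt 2" "cmod (v c) + cmod (v (c + 2^t))"] by simp
    then show "cmod (app (2^N) V v c) + cmod (app (2^N) V v (c + 2^t)) \<le> sqrt 2 * (cmod (v c) + cmod (v (c + 2^t)))"
      using c P[of c v] pair_l1_up by auto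
  qed
  also have "\<dots> = sqrt 2 * l1 (2^N) v" unfolding l1_def
    by (simp add: sum_split[OF t] sum_distrib_left)
  finally show "l1 (2^N) (app (2^N) V v) \<le> sqrt 2 * l1 (2^N) v" .
  have "l1 (2^N) v = (\<Sum>c\<in>?C. cmod (v c) + cmod (v (c + 2^t)))"
    unfolding l1_def by (rule sum_split[OF t])
  also have "\<dots> \<le> (\<Sum>c\<in>?C. sqrt 2 * (cmod (app (2^N) V v c) + cmod (app (2^N) V v (c + 2^t))))"
  proof (rule sum_mono)
    fix c assume c: "c \<in> ?C"
    have "cmod (v c) + cmod (v (c + 2^t)) \<le> sqrt 2 * (cmod (v c) + cmod (v (c + 2^t)))"
      using mult_right_mono[of 1 "sqrt 2" "cmod (v c) + cmod (v (c + 2^t))"] by simp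
    then show "cmod (v c) + cmod (v (c + 2^t)) \<le> sqrt 2 * (cmod (app (2^N) V v c) + cmod (app (2^N) V v (c + 2^t)))"
      using c P[of c v] pair_l1_down by auto
  qed
  also have "\<dots> = sqrt 2 * l1 (2^N) (app (2^N) V v)" unfolding l1_def
    by (simp add: sum_split[OF t] sum_distrib_left)
  finally show "l1 (2^N) v \<le> sqrt 2 * l1 (2^N) (app (2^N) V v)" .
  have "ip (2^N) (app (2^N) V u) (app (2^N) V v) = (\<Sum>c\<in>?C.
      cnj (app (2^N) V u c) * app (2^N) V v c + cnj (app (2^N) V u (c + 2^t)) * app (2^N) V v (c + 2^t))"
    unfolding ip_def by (rule sum_split[OF t])
  also have "\<dots> = (\<Sum>c\<in>?C. cnj (u c) * v c + cnj (u (c + 2^t)) * v (c + 2^t))"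
  proof (rule sum.cong[OF refl])
    fix c assume c: "c \<in> ?C"
    show "cnj (app (2^N) V u c) * app (2^N) V v c + cnj (app (2^N) V u (c + 2^t)) * app (2^N) V v (c + 2^t)
       = cnj (u c) * v c + cnj (u (c + 2^t)) * v (c + 2^t)"
      using c P[of c u] P[of c v] pair_ip by auto
  qed
  also have "\<dots> = ip (2^N) u v" unfolding ip_def by (rule sum_split[OF t, symmetric])
  finally show "ip (2^N) (app (2^N) V u) (app (2^N) V v) = ip (2^N) u v" .
qed



lemma circ_props:
  assumes "\<forall>p\<in>set ps. gen_ctrl_hadamard N (fst p) \<and> incoherent N (snd p)"
  shows "l1 (2^N) (app (2^N) (circ (2^N) A ps) v) \<le> sqrt 2 ^ length ps * l1 (2^N) (app (2^N) A v)
   \<and> l1 (2^N) (app (2^N) A v) \<le> sqrt 2 ^ length ps * l1 (2^N) (app (2^N) (circ (2^N) A ps) v)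
   \<and> ip (2^N) (app (2^N) (circ (2^N) A ps) u) (app (2^N) (circ (2^N) A ps) v) = ip (2^N) (app (2^N) A u) (app (2^N) A v)"
  using assms
proof (induction ps arbitrary: A)
  case Nil then show ?case by simp
next
  case (Cons p ps)
  let ?d = "2^N::nat"
  let ?A' = "mmult ?d (snd p) (mmult ?d (fst p) A)"
  have g: "gen_ctrl_hadamard N (fst p)" "incoherent N (snd p)" using Cons.prems by auto
  have IH: "l1 ?d (app ?d (circ ?d ?A' ps) v) \<le> sqrt 2 ^ length ps * l1 ?d (app ?d ?A' v)
   \<and> l1 ?d (app ?d ?A' v) \<le> sqrt 2 ^ length ps * l1 ?d (app ?d (circ ?d ?A' ps) v)
   \<and> ip ?d (app ?d (circ ?d ?A' ps) u) (app ?d (circ ?d ?A' ps) v) = ip ?d (app ?d ?A' u) (app ?d ?A' v)"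
    using Cons by auto
  have e: "app ?d ?A' w = app ?d (snd p) (app ?d (fst p) (app ?d A w))" for w
    by (simp add: app_mmult)
  have l1A': "l1 ?d (app ?d ?A' w) = l1 ?d (app ?d (fst p) (app ?d A w))" for w
    unfolding e using incoherent_props[OF g(2)] by blast
  have ipA': "ip ?d (app ?d ?A' w) (app ?d ?A' w') = ip ?d (app ?d A w) (app ?d A w')" for w w'
    unfolding e using incoherent_props[OF g(2)] ch_props(3)[OF g(1)] by metis
  have c: "circ ?d A (p # ps) = circ ?d ?A' ps" by simp
  have s0: "0 \<le> sqrt 2 ^ length ps" by simp
  have 1: "l1 ?d (app ?d (circ ?d A (p # ps)) v) \<le> sqrt 2 ^ length (p # ps) * l1 ?d (app ?d A v)"
  proof -
    have "l1 ?d (app ?d (circ ?d A (p # ps)) v) \<le> sqrt 2 ^ length ps * l1 ?d (app ?d ?A' v)"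
      using IH c by simp
    also have "\<dots> \<le> sqrt 2 ^ length ps * (sqrt 2 * l1 ?d (app ?d A v))"
      unfolding l1A' by (rule mult_left_mono[OF ch_props(1)[OF g(1)] s0])
    finally show ?thesis by (simp add: mult_ac)
  qed
  have 2: "l1 ?d (app ?d A v) \<le> sqrt 2 ^ length (p # ps) * l1 ?d (app ?d (circ ?d A (p # ps)) v)"
  proof -
    have "l1 ?d (app ?d A v) \<le> sqrt 2 * l1 ?d (app ?d ?A' v)"
      unfolding l1A' by (rule ch_props(2)[OF g(1)])
    also have "\<dots> \<le> sqrt 2 * (sqrt 2 ^ length ps * l1 ?d (app ?d (circ ?d A (p # ps)) v))"
      using IH c by (intro mult_left_mono) auto
    finally show ?thesis by (simp add: mult_ac)
  qed
  show ?case using 1 2 IH c ipA' by simp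
qed

lemma channel_rank1:
  "channel n m \<gamma> W (\<lambda>a b. u a * cnj (u b)) x x' =
   (\<Sum>y<2^m. app (2^(n+m)) W (\<lambda>a. u (a div 2^m) * \<gamma> (a mod 2^m)) (x*2^m+y)
       * cnj (app (2^(n+m)) W (\<lambda>a. u (a div 2^m) * \<gamma> (a mod 2^m)) (x'*2^m+y)))"
  unfolding channel_def Let_def app_def
proof (rule sum.cong[OF refl])
  fix y
  let ?w = "\<lambda>a. u (a div 2^m) * \<gamma> (a mod 2^m)"
  let ?D = "{..<(2::nat)^(n+m)}"
  have "(\<Sum>j\<in>?D. W (x * 2 ^ m + y) j * ?w j) * cnj (\<Sum>j\<in>?D. W (x' * 2 ^ m + y) j * ?w j)
      = (\<Sum>a\<in>?D. W (x * 2 ^ m + y) a * ?w a) * (\<Sum>b\<in>?D. cnj (W (x' * 2 ^ m + y) b) * cnj (?w b))"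
    by (simp add: cnj_sum)
  also have "\<dots> = (\<Sum>a\<in>?D. \<Sum>b\<in>?D. (W (x * 2 ^ m + y) a * ?w a) * (cnj (W (x' * 2 ^ m + y) b) * cnj (?w b)))"
    by (rule sum_product)
  finally show "(\<Sum>a\<in>?D. \<Sum>b\<in>?D. W (x * 2 ^ m + y) a *
          (u (a div 2 ^ m) * cnj (u (b div 2 ^ m)) * \<gamma> (a mod 2 ^ m) * cnj (\<gamma> (b mod 2 ^ m))) *
          cnj (W (x' * 2 ^ m + y) b)) =
         (\<Sum>j\<in>?D. W (x * 2 ^ m + y) j * ?w j) * cnj (\<Sum>j\<in>?D. W (x' * 2 ^ m + y) j * ?w j)"
    by (simp add: mult_ac)
qed

lemma hconj_rank1:
  "hadamard_conj n (\<lambda>a b. u a * cnj (u b)) x x' =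
   (\<Sum>a<2^n. hadamard_n n x a * u a) * cnj (\<Sum>b<2^n. hadamard_n n x' b * u b)"
proof -
  have "(\<Sum>a<2^n. hadamard_n n x a * u a) * cnj (\<Sum>b<2^n. hadamard_n n x' b * u b)
    = (\<Sum>a<2^n. hadamard_n n x a * u a) * (\<Sum>b<2^n. cnj (hadamard_n n x' b) * cnj (u b))"
    by (simp add: cnj_sum)
  also have "\<dots> = (\<Sum>a<2^n. \<Sum>b<2^n. (hadamard_n n x a * u a) * (cnj (hadamard_n n x' b) * cnj (u b)))"
    by (rule sum_product)
  finally show ?thesis unfolding hadamard_conj_def by (simp add: mult_ac)
qed

lemma sq_self: "a * cnj a = complex_of_real ((cmod a)\<^sup>2)"
  by (rule complex_norm_square[symmetric])

lemma density_rank1: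
  assumes "(\<Sum>a<2^n. (cmod (u a))\<^sup>2) = 1"
  shows "density n (\<lambda>a b. u a * cnj (u b))"
  unfolding density_def Let_def
proof (intro conjI allI)
  fix v :: "nat \<Rightarrow> complex"
  let ?z = "\<Sum>i<2^n. cnj (v i) * u i"
  have "(\<Sum>i<2^n. \<Sum>j<2^n. cnj (v i) * (u i * cnj (u j)) * v j) = ?z * cnj ?z"
  proof -
    have "?z * cnj ?z = ?z * (\<Sum>j<2^n. v j * cnj (u j))" by (simp add: cnj_sum)
    also have "\<dots> = (\<Sum>i<2^n. \<Sum>j<2^n. (cnj (v i) * u i) * (v j * cnj (u j)))" by (rule sum_product)
    finally show ?thesis by (simp add: mult_ac)
  qed
  also have "\<dots> = complex_of_real ((cmod ?z)\<^sup>2)" by (rule sq_self)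
  finally have q: "(\<Sum>i<2^n. \<Sum>j<2^n. cnj (v i) * (u i * cnj (u j)) * v j) = complex_of_real ((cmod ?z)\<^sup>2)" .
  show "Im (\<Sum>i<2^n. \<Sum>j<2^n. cnj (v i) * (u i * cnj (u j)) * v j) = 0" unfolding q by simp
  show "0 \<le> Re (\<Sum>i<2^n. \<Sum>j<2^n. cnj (v i) * (u i * cnj (u j)) * v j)" unfolding q by simp
next
  have "(\<Sum>i<2^n. u i * cnj (u i)) = complex_of_real (\<Sum>a<2^n. (cmod (u a))\<^sup>2)"
    unfolding of_real_sum by (rule sum.cong[OF refl]) (rule sq_self)
  then show "(\<Sum>i<2^n. u i * cnj (u i)) = 1" using assms by simp
qed



lemma sum_only0:
  fixes F :: "nat \<Rightarrow> 'a::comm_monoid_add"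
  assumes "\<And>x. 0 < x \<Longrightarrow> x < P \<Longrightarrow> F x = 0" "0 < P"
  shows "(\<Sum>x<P. F x) = F 0"
proof -
  have "(\<Sum>x<P. F x) = F 0 + (\<Sum>x\<in>{..<P} - {0}. F x)"
    using sum.remove[of "{..<P}" 0 F] assms(2) by simp
  also have "(\<Sum>x\<in>{..<P} - {0}. F x) = 0" using assms(1) by (intro sum.neutral) auto
  finally show ?thesis by simp
qed

lemma dm: "y < (M::nat) \<Longrightarrow> (x*M+y) div M = x \<and> (x*M+y) mod M = y"
  by simp

lemma ip_self: "ip d v v = complex_of_real (\<Sum>i<d. (cmod (v i))\<^sup>2)"
  unfolding ip_def of_real_sum by (rule sum.cong[OF refl]) (simp only: mult.commute[of "cnj _"] sq_self)


lemma sum_expand: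
  "(\<Sum>i\<in>A. (f i - g i) * cnj (f i - g i)) = (\<Sum>i\<in>A. f i * cnj (f i)) - (\<Sum>i\<in>A. f i * cnj (g i))
     - (\<Sum>i\<in>A. g i * cnj (f i)) + (\<Sum>i\<in>A. g i * cnj (g i))"
  by (simp add: algebra_simps sum.distrib sum_subtractf)

lemma sum_zero_eq:
  assumes "finite A" "(\<Sum>i\<in>A. (f i - g i) * cnj (f i - g i)) = 0" "i \<in> A"
  shows "f i = (g i :: complex)"
proof -
  have "complex_of_real (\<Sum>i\<in>A. (cmod (f i - g i))\<^sup>2) = (\<Sum>i\<in>A. (f i - g i) * cnj (f i - g i))"
    unfolding of_real_sum by (rule sum.cong[OF refl]) (rule sq_self[symmetric])
  then have "complex_of_real (\<Sum>i\<in>A. (cmod (f i - g i))\<^sup>2) = 0"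
    using assms(2) by simp
  then have "(\<Sum>i\<in>A. (cmod (f i - g i))\<^sup>2) = 0" by (metis of_real_eq_0_iff)
  then have "\<forall>x\<in>A. (cmod (f x - g x))\<^sup>2 = 0"
    using sum_nonneg_eq_0_iff[OF assms(1), of "\<lambda>i. (cmod (f i - g i))\<^sup>2"] by simp
  then have "(cmod (f i - g i))\<^sup>2 = 0" using assms(3) by blast
  then show ?thesis by simp
qed

lemma conj_swap: "(\<Sum>i\<in>A. g i * cnj (f i)) = cnj (\<Sum>i\<in>A. f i * cnj (g i))"
  by (simp add: cnj_sum mult.commute)



theorem theorem3:
  fixes n k m :: nat and \<gamma> :: "nat \<Rightarrow> complex" and U0 :: cmat
    and layers :: "(cmat \<times> cmat) list"
  assumes "k < n"
    and "length layers = k"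
    and "(\<Sum>y<2^m. (cmod (\<gamma> y))\<^sup>2) = 1"
    and "incoherent (n + m) U0"
    and "\<forall>p \<in> set layers. gen_ctrl_hadamard (n + m) (fst p) \<and> incoherent (n + m) (snd p)"
  shows "\<exists>\<rho>. density n \<rho> \<and>
           (\<exists>x<2^n. \<exists>x'<2^n.
              channel n m \<gamma> (circ (2^(n+m)) U0 layers) \<rho> x x' \<noteq> hadamard_conj n \<rho> x x')"
proof (rule ccontr)
  assume "\<not> ?thesis"
  then have H: "\<And>\<rho> x x'. density n \<rho> \<Longrightarrow> x < 2^n \<Longrightarrow> x' < 2^n \<Longrightarrow>
      channel n m \<gamma> (circ (2^(n+m)) U0 layers) \<rho> x x' = hadamard_conj n \<rho> x x'"
    by blast
  define M where "M = (2::nat)^m"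
  define P where "P = (2::nat)^n"
  define D where "D = (2::nat)^(n+m)"
  have DPM: "D = P * M" unfolding D_def P_def M_def by (simp add: power_add)
  have M0: "0 < M" and P0: "0 < P" unfolding M_def P_def by auto
  define W where "W = circ D U0 layers"
  define r :: real where "r = sqrt (2^n)"
  have r2: "r * r = 2^n" unfolding r_def by simp
  have rpos: "r > 0" unfolding r_def by simp
  have rP: "real P = r * r" unfolding P_def using r2 by simp
  define cp :: complex where "cp = complex_of_real (1/r)"
  define u0 :: "nat \<Rightarrow> complex" where "u0 = (\<lambda>a. if a = 0 then 1 else 0)"
  define up :: "nat \<Rightarrow> complex" where "up = (\<lambda>a. cp)"
  define w0 where "w0 = (\<lambda>a. u0 (a div 2^m) * \<gamma> (a mod 2^m))"
  define wp where "wp = (\<lambda>a. up (a div 2^m) * \<gamma> (a mod 2^m))"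
  define \<Psi> where "\<Psi> = app D W w0"
  define X where "X = app D W wp"
  have gam: "(\<Sum>y<M. (cmod (\<gamma> y))\<^sup>2) = 1" using assms(3) unfolding M_def .
  have CP: "l1 D (app D W v) \<le> sqrt 2 ^ k * l1 D (app D U0 v)
      \<and> l1 D (app D U0 v) \<le> sqrt 2 ^ k * l1 D (app D W v)
      \<and> ip D (app D W u) (app D W v) = ip D (app D U0 u) (app D U0 v)" for u v
    using circ_props[OF assms(5), of U0 v u] assms(2) unfolding W_def D_def by simp
  have U0p: "l1 D (app D U0 v) = l1 D v \<and> ip D (app D U0 u) (app D U0 v) = ip D u v" for u v
    using incoherent_props[OF assms(4)] unfolding D_def by blast
  have WL1: "l1 D (app D W v) \<le> sqrt 2 ^ k * l1 D v" for v using CP[of v v] U0p[of v v] by simp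
  have WL2: "l1 D v \<le> sqrt 2 ^ k * l1 D (app D W v)" for v using CP[of v v] U0p[of v v] by simp
  have WIP: "ip D (app D W u) (app D W v) = ip D u v" for u v using CP[of v u] U0p[of v u] by simp
  have h0: "hadamard_n n x 0 = 1 / complex_of_real r" for x
    unfolding hadamard_n_def bit_of_def r_def by simp
  have h0': "hadamard_n n 0 a = 1 / complex_of_real r" for a
    unfolding hadamard_n_def bit_of_def r_def by simp
  have d0: "density n (\<lambda>a b. u0 a * cnj (u0 b))"
  proof (rule density_rank1)
    have "(\<Sum>a<2^n. (cmod (u0 a))\<^sup>2) = (\<Sum>a<(2::nat)^n. if a = 0 then 1 else 0)"
      by (rule sum.cong) (auto simp: u0_def)
    then show "(\<Sum>a<2^n. (cmod (u0 a))\<^sup>2) = 1" by simp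
  qed
  have dp: "density n (\<lambda>a b. up a * cnj (up b))"
  proof (rule density_rank1)
    have "(\<Sum>a<2^n. (cmod (up a))\<^sup>2) = real P * (1/r)\<^sup>2"
      unfolding up_def cp_def P_def using rpos by (simp add: norm_divide)
    also have "\<dots> = 1" using rP rpos by (simp add: power2_eq_square)
    finally show "(\<Sum>a<2^n. (cmod (up a))\<^sup>2) = 1" .
  qed
  have s1: "(\<Sum>a<2^n. hadamard_n n x a * u0 a) = hadamard_n n x 0" for x
  proof -
    have "(\<Sum>a<2^n. hadamard_n n x a * u0 a) = (\<Sum>a<(2::nat)^n. if a = 0 then hadamard_n n x a else 0)"
      by (rule sum.cong) (auto simp: u0_def)
    then show ?thesis by simp
  qed
  have F1: "(\<Sum>y<M. \<Psi> (x*M+y) * cnj (\<Psi> (x'*M+y))) = complex_of_real (1/2^n)"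
    if x: "x < P" "x' < P" for x x'
  proof -
    have "(\<Sum>y<M. \<Psi> (x*M+y) * cnj (\<Psi> (x'*M+y))) = channel n m \<gamma> W (\<lambda>a b. u0 a * cnj (u0 b)) x x'"
      unfolding channel_rank1 \<Psi>_def w0_def M_def D_def ..
    also have "\<dots> = hadamard_conj n (\<lambda>a b. u0 a * cnj (u0 b)) x x'"
      using H[OF d0] x unfolding W_def D_def P_def by simp
    also have "\<dots> = hadamard_n n x 0 * cnj (hadamard_n n x' 0)"
      unfolding hconj_rank1 s1 ..
    also have "\<dots> = complex_of_real (1/(r*r))" unfolding h0 by simp
    finally show ?thesis using r2 by simp
  qed
  have F2: "(\<Sum>y<M. X y * cnj (X y)) = 1"
  proof -
    have "(\<Sum>y<M. X y * cnj (X y)) = (\<Sum>y<M. X (0*M+y) * cnj (X (0*M+y)))" by simp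
    also have "\<dots> = channel n m \<gamma> W (\<lambda>a b. up a * cnj (up b)) 0 0"
      unfolding channel_rank1 X_def wp_def M_def D_def ..
    also have "\<dots> = hadamard_conj n (\<lambda>a b. up a * cnj (up b)) 0 0"
      using H[OF dp] unfolding W_def D_def by simp
    also have "\<dots> = (of_nat P * (1 / complex_of_real r * cp)) * cnj (of_nat P * (1 / complex_of_real r * cp))"
      unfolding hconj_rank1 h0' up_def P_def by simp
    also have "of_nat P * (1 / complex_of_real r * cp) = 1"
    proof -
      have "of_nat P * (1 / complex_of_real r * cp) = complex_of_real (real P * (1 / r * (1 / r)))"
        unfolding cp_def by simp
      also have "real P * (1 / r * (1 / r)) = 1" using rP rpos by simp
      finally show ?thesis by simp
    qed
    finally show ?thesis by simp
  qed
  have F2r: "(\<Sum>y<M. (cmod (X y))\<^sup>2) = 1"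
  proof -
    have "complex_of_real (\<Sum>y<M. (cmod (X y))\<^sup>2) = (\<Sum>y<M. X y * cnj (X y))"
      unfolding of_real_sum by (rule sum.cong[OF refl]) (rule sq_self[symmetric])
    then show ?thesis using F2 by (metis of_real_eq_1_iff)
  qed
  have F3: "(\<Sum>i<D. (cmod (X i))\<^sup>2) = 1"
  proof -
    have "complex_of_real (\<Sum>i<D. (cmod (X i))\<^sup>2) = complex_of_real (\<Sum>i<D. (cmod (wp i))\<^sup>2)"
      using WIP[of wp wp] unfolding X_def ip_self .
    then have "(\<Sum>i<D. (cmod (X i))\<^sup>2) = (\<Sum>i<D. (cmod (wp i))\<^sup>2)" by (metis of_real_eq_iff)
    also have "\<dots> = (\<Sum>x<P. \<Sum>y<M. (cmod (wp (x*M+y)))\<^sup>2)" unfolding DPM by (rule sum_group)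
    also have "\<dots> = (\<Sum>x<P. \<Sum>y<M. (1/r)\<^sup>2 * (cmod (\<gamma> y))\<^sup>2)"
      using dm unfolding wp_def up_def cp_def M_def[symmetric] using rpos
      by (intro sum.cong refl) (simp add: norm_mult norm_divide power_divide power_mult_distrib)
    also have "\<dots> = real P * (1/r)\<^sup>2" using gam by (simp add: sum_distrib_left[symmetric])
    also have "\<dots> = 1" using rP rpos by (simp add: power2_eq_square)
    finally show ?thesis .
  qed
  have G2: "X (x*M+y) = 0" if xy: "0 < x" "x < P" "y < M" for x y
  proof -
    define F where "F = (\<lambda>x. \<Sum>y<M. (cmod (X (x*M+y)))\<^sup>2)"
    have "(\<Sum>x<P. F x) = 1" using F3 unfolding F_def DPM sum_group .
    moreover have "(\<Sum>x<P. F x) = F 0 + (\<Sum>x\<in>{..<P} - {0}. F x)"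
      using sum.remove[of "{..<P}" 0 F] P0 by simp
    moreover have "F 0 = 1" using F2r unfolding F_def by simp
    ultimately have "(\<Sum>x\<in>{..<P} - {0}. F x) = 0" by simp
    then have "F x = 0" using sum_nonneg_eq_0_iff[of "{..<P} - {0}" F] xy unfolding F_def
      by (simp add: sum_nonneg)
    then have "\<forall>y\<in>{..<M}. (cmod (X (x*M+y)))\<^sup>2 = 0"
      using sum_nonneg_eq_0_iff[of "{..<M}" "\<lambda>y. (cmod (X (x*M+y)))\<^sup>2"] unfolding F_def by simp
    then have "(cmod (X (x*M+y)))\<^sup>2 = 0" using xy by blast
    then show ?thesis by simp
  qed
  have G1: "\<Psi> (x*M+y) = \<Psi> y" if xy: "x < P" "y < M" for x y
  proof (rule sum_zero_eq[of "{..<M}" "\<lambda>y. \<Psi> (x*M+y)" "\<lambda>y. \<Psi> y"])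
    show "finite {..<M}" by simp
    show "y \<in> {..<M}" using xy by simp
    have a: "(\<Sum>y<M. \<Psi> (x*M+y) * cnj (\<Psi> (x*M+y))) = complex_of_real (1/2^n)" using F1 xy by simp
    have b: "(\<Sum>y<M. \<Psi> (x*M+y) * cnj (\<Psi> y)) = complex_of_real (1/2^n)" using F1[of x 0] xy P0 by simp
    have c: "(\<Sum>y<M. \<Psi> y * cnj (\<Psi> (x*M+y))) = complex_of_real (1/2^n)" using F1[of 0 x] xy P0 by simp
    have d: "(\<Sum>y<M. \<Psi> y * cnj (\<Psi> y)) = complex_of_real (1/2^n)" using F1[of 0 0] P0 by simp
    show "(\<Sum>y<M. (\<Psi> (x*M+y) - \<Psi> y) * cnj (\<Psi> (x*M+y) - \<Psi> y)) = 0"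
      unfolding sum_expand a b c d by simp
  qed
  have K: "(\<Sum>y<M. cnj (\<Psi> y) * X y) = cp"
  proof -
    have "ip D \<Psi> X = ip D w0 wp" unfolding \<Psi>_def X_def by (rule WIP)
    moreover have "ip D \<Psi> X = (\<Sum>y<M. cnj (\<Psi> y) * X y)"
    proof -
      have "ip D \<Psi> X = (\<Sum>x<P. \<Sum>y<M. cnj (\<Psi> (x*M+y)) * X (x*M+y))"
        unfolding ip_def DPM by (rule sum_group)
      also have "\<dots> = (\<Sum>y<M. cnj (\<Psi> (0*M+y)) * X (0*M+y))"
        by (rule sum_only0[OF _ P0]) (simp add: G2)
      finally show ?thesis by simp
    qed
    moreover have "ip D w0 wp = cp"
    proof -
      have "ip D w0 wp = (\<Sum>x<P. \<Sum>y<M. cnj (w0 (x*M+y)) * wp (x*M+y))"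
        unfolding ip_def DPM by (rule sum_group)
      also have "\<dots> = (\<Sum>y<M. cnj (w0 (0*M+y)) * wp (0*M+y))"
        by (rule sum_only0[OF _ P0]) (simp add: w0_def u0_def M_def[symmetric] dm)
      also have "\<dots> = (\<Sum>y<M. cp * (\<gamma> y * cnj (\<gamma> y)))"
        by (intro sum.cong refl) (simp add: w0_def u0_def wp_def up_def M_def[symmetric] dm mult_ac)
      also have "\<dots> = cp * complex_of_real (\<Sum>y<M. (cmod (\<gamma> y))\<^sup>2)"
        by (simp add: sq_self sum_distrib_left)
      finally show ?thesis using gam by simp
    qed
    ultimately show ?thesis by simp
  qed
  have G3: "X y = complex_of_real r * \<Psi> y" if y: "y < M" for y
  proof (rule sum_zero_eq[of "{..<M}" "X" "\<lambda>y. complex_of_real r * \<Psi> y"])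
    show "finite {..<M}" by simp
    show "y \<in> {..<M}" using y by simp
    have rr: "complex_of_real r * cp = 1"
    proof -
      have "complex_of_real r * cp = complex_of_real (r * (1/r))" unfolding cp_def by (rule of_real_mult[symmetric])
      also have "r * (1/r) = 1" using rpos by simp
      finally show ?thesis by simp
    qed
    have b: "(\<Sum>y<M. X y * cnj (complex_of_real r * \<Psi> y)) = 1"
    proof -
      have "(\<Sum>y<M. X y * cnj (complex_of_real r * \<Psi> y)) = (\<Sum>y<M. complex_of_real r * (cnj (\<Psi> y) * X y))"
        by (rule sum.cong[OF refl]) (simp add: mult_ac)
      also have "\<dots> = complex_of_real r * cp" unfolding sum_distrib_left[symmetric] K ..
      finally show ?thesis using rr by simp
    qed
    have c: "(\<Sum>y<M. complex_of_real r * \<Psi> y * cnj (X y)) = 1"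
    proof -
      have "(\<Sum>y<M. complex_of_real r * \<Psi> y * cnj (X y)) = cnj (\<Sum>y<M. X y * cnj (complex_of_real r * \<Psi> y))"
        by (rule conj_swap)
      then show ?thesis unfolding b by simp
    qed
    have F1': "(\<Sum>y<M. \<Psi> y * cnj (\<Psi> y)) = complex_of_real (1/2^n)" using F1[OF P0 P0] by simp
    have d: "(\<Sum>y<M. complex_of_real r * \<Psi> y * cnj (complex_of_real r * \<Psi> y)) = 1"
    proof -
      have "(\<Sum>y<M. complex_of_real r * \<Psi> y * cnj (complex_of_real r * \<Psi> y))
          = (\<Sum>y<M. complex_of_real (r*r) * (\<Psi> y * cnj (\<Psi> y)))"
        by (rule sum.cong[OF refl]) (simp add: mult_ac)
      also have "\<dots> = complex_of_real (r*r) * complex_of_real (1/2^n)" unfolding sum_distrib_left[symmetric] F1' ..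
      also have "\<dots> = complex_of_real (r*r * (1/2^n))" by (rule of_real_mult[symmetric])
      also have "r*r * (1/2^n) = 1" unfolding r2 by simp
      finally show ?thesis by simp
    qed
    show "(\<Sum>y<M. (X y - complex_of_real r * \<Psi> y) * cnj (X y - complex_of_real r * \<Psi> y)) = 0"
      unfolding sum_expand F2 b c d by simp
  qed
  define L where "L = (\<Sum>y<M. cmod (\<Psi> y))"
  define G where "G = (\<Sum>y<M. cmod (\<gamma> y))"
  have l\<Psi>: "l1 D \<Psi> = real P * L"
  proof -
    have "l1 D \<Psi> = (\<Sum>x<P. \<Sum>y<M. cmod (\<Psi> (x*M+y)))" unfolding l1_def DPM by (rule sum_group)
    also have "\<dots> = (\<Sum>x<P. L)" unfolding L_def by (intro sum.cong refl) (simp add: G1)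
    finally show ?thesis by simp
  qed
  have lX: "l1 D X = r * L"
  proof -
    have "l1 D X = (\<Sum>x<P. \<Sum>y<M. cmod (X (x*M+y)))" unfolding l1_def DPM by (rule sum_group)
    also have "\<dots> = (\<Sum>y<M. cmod (X (0*M+y)))"
      by (rule sum_only0[OF _ P0]) (simp add: G2)
    also have "\<dots> = (\<Sum>y<M. r * cmod (\<Psi> y))"
      using rpos by (intro sum.cong refl) (simp add: G3 norm_mult)
    finally show ?thesis unfolding L_def by (simp add: sum_distrib_left)
  qed
  have lw0: "l1 D w0 = G"
  proof -
    have "l1 D w0 = (\<Sum>x<P. \<Sum>y<M. cmod (w0 (x*M+y)))" unfolding l1_def DPM by (rule sum_group)
    also have "\<dots> = (\<Sum>y<M. cmod (w0 (0*M+y)))"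
      by (rule sum_only0[OF _ P0]) (simp add: w0_def u0_def M_def[symmetric] dm)
    finally show ?thesis unfolding G_def by (simp add: w0_def u0_def M_def[symmetric] dm)
  qed
  have lwp: "l1 D wp = r * G"
  proof -
    have "l1 D wp = (\<Sum>x<P. \<Sum>y<M. cmod (wp (x*M+y)))" unfolding l1_def DPM by (rule sum_group)
    also have "\<dots> = (\<Sum>x<P. (1/r) * G)" unfolding G_def
      using rpos by (intro sum.cong refl)
        (simp add: wp_def up_def cp_def M_def[symmetric] dm norm_mult norm_divide sum_distrib_left)
    also have "\<dots> = real P * ((1/r) * G)" by simp
    also have "\<dots> = (r * (r * (1/r))) * G" unfolding rP by (simp only: mult.assoc)
    also have "r * (1/r) = 1" using rpos by simp
    finally show ?thesis by simp
  qed
  have I1: "real P * L \<le> sqrt 2 ^ k * G" using WL1[of w0] l\<Psi> lw0 unfolding \<Psi>_def by simp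
  have "r * G \<le> sqrt 2 ^ k * (r * L)" using WL2[of wp] lX lwp unfolding X_def by simp
  then have "r * G \<le> r * (sqrt 2 ^ k * L)" by (simp only: mult.left_commute)
  then have I2: "G \<le> sqrt 2 ^ k * L" using mult_le_cancel_left_pos[OF rpos] by blast
  have Lpos: "L > 0"
  proof (rule ccontr)
    assume "\<not> L > 0"
    moreover have "L \<ge> 0" unfolding L_def by (simp add: sum_nonneg)
    ultimately have L0: "L = 0" by simp
    have "\<forall>y\<in>{..<M}. cmod (\<Psi> y) = 0"
      using sum_nonneg_eq_0_iff[of "{..<M}" "\<lambda>y. cmod (\<Psi> y)"] L0 unfolding L_def by simp
    then have "(\<Sum>y<M. \<Psi> (0*M+y) * cnj (\<Psi> (0*M+y))) = 0" by simp
    then show False using F1[OF P0 P0] by simp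
  qed
  have s2: "sqrt 2 ^ k * sqrt 2 ^ k = (2::real) ^ k"
    by (simp add: power_mult_distrib[symmetric])
  have "sqrt 2 ^ k * G \<le> sqrt 2 ^ k * (sqrt 2 ^ k * L)"
    by (rule mult_left_mono[OF I2]) simp
  then have "real P * L \<le> sqrt 2 ^ k * (sqrt 2 ^ k * L)"
    using I1 by (rule order_trans[rotated])
  also have "\<dots> = 2 ^ k * L" by (simp only: mult.assoc[symmetric] s2)
  finally have "real P * L \<le> 2 ^ k * L" .
  then have "real P \<le> 2 ^ k" using mult_le_cancel_right_pos[OF Lpos] by blast
  then have "(2::real) ^ n \<le> 2 ^ k" unfolding P_def by simp
  then have "n \<le> k" by simp
  then show False using assms(1) by simp
qed

end
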